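(* Let $\dot G$ be a connected, non-complete, $5$-regular and $3$ net-regular SRSG belonging to $\mathcal C_1\cup\mathcal C_4\cup\mathcal C_5$. If $\dot G$ contains an unbalanced triangle (a triangle whose product of edge signs is $-1$), then $\dot G$ is isomorphic either to $\dot S^1_8$, an SRSG with parameters $(8,5,-2,4,4)$, or to $\dot S^1_{10}$, an SRSG with parameters $(10,5,-2,4,2)$.
   Context: A signed graph $\dot G=(G,\sigma)$ is a simple graph $G$ with a sign function $\sigma:E(G)\to\{+1,-1\}$; adjacency matrix $A_{\dot G}$ has entries $\sigma(v_iv_j)$ for adjacent $v_i,v_j$ and $0$ otherwise. Connectedness and degree refer to $G$; $d^\pm(v)$ are the numbers of positive/negative edges at $v$; net-degree is $d^+(v)-d^-(v)$; $\rho$ net-regular means all net-degrees equal $\rho$. Homogeneous means all edges have the same sign. $\dot G$ on $n$ vertices is an SRSG if it is neither homogeneous complete nor edgeless and there exist $r\in\mathbb N$, $a,b,c\in\mathbb Z$ with $(A_{\dot G}^2)_{ii}=r$, $(A_{\dot G}^2)_{ij}=a$ for positive edges $v_iv_j$, $=b$ for negative edges, $=c$ for distinct non-adjacent $v_i,v_j$; parameters $(n,r,a,b,c)$ (non-complete) or $(n,r,a,b)$ (complete). Inhomogeneous SRSGs are split into classes: $\mathcal C_1$: $a=-b$ and either complete, or non-complete with $c\neq0$; $\mathcal C_2$: $a=-b$, non-complete, $c=0$; $\mathcal C_3$: $a\ne -b$ and either complete or non-complete with $c=\frac{a+b}{2}$; $\mathcal C_4$: $a\neq-b$, non-complete, $c=0$;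 $\mathcal C_5$: $a\ne-b$, non-complete, $c\ne\frac{a+b}2$, $c\neq 0$. For $m\in\{4,5\}$, $\dot S^1_{2m}$ has vertex set $\{x_t,y_t:t\in\mathbb Z_m\}$, negative edges $x_ty_t$ ($t\in\mathbb Z_m$), positive edges all four edges between $\{x_t,y_t\}$ and $\{x_{t+1},y_{t+1}\}$ for each $t$, and no other edges. *)

theory Defs
  imports Main
begin

text \<open>A signed graph on a finite vertex set V (inside an ambient type 'a), given by
  its signed adjacency function sg: sg u v is +1 / -1 for a positive / negative edge
  uv and 0 if u, v are non-adjacent (in particular sg v v = 0).\<close>

record 'a sgraph =
  verts :: "'a set"
  sgn :: "'a \<Rightarrow> 'a \<Rightarrow> int"

definition wf_sgraph :: "'a sgraph \<Rightarrow> bool" where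
  "wf_sgraph G \<longleftrightarrow> finite (verts G)
     \<and> (\<forall>u v. sgn G u v \<in> {-1, 0, 1})
     \<and> (\<forall>u v. sgn G u v = sgn G v u)
     \<and> (\<forall>v. sgn G v v = 0)
     \<and> (\<forall>u v. sgn G u v \<noteq> 0 \<longrightarrow> u \<in> verts G \<and> v \<in> verts G)"

definition adj :: "'a sgraph \<Rightarrow> 'a \<Rightarrow> 'a \<Rightarrow> bool" where
  "adj G u v \<longleftrightarrow> sgn G u v \<noteq> 0"

definition A2 :: "'a sgraph \<Rightarrow> 'a \<Rightarrow> 'a \<Rightarrow> int" where
  "A2 G u v = (\<Sum>w\<in>verts G. sgn G u w * sgn G w v)"

definition degree :: "'a sgraph \<Rightarrow> 'a \<Rightarrow> nat" where
  "degree G v = card {u \<in> verts G. adj G v u}"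

definition pos_degree :: "'a sgraph \<Rightarrow> 'a \<Rightarrow> nat" where
  "pos_degree G v = card {u \<in> verts G. sgn G v u = 1}"

definition neg_degree :: "'a sgraph \<Rightarrow> 'a \<Rightarrow> nat" where
  "neg_degree G v = card {u \<in> verts G. sgn G v u = -1}"

definition net_degree :: "'a sgraph \<Rightarrow> 'a \<Rightarrow> int" where
  "net_degree G v = int (pos_degree G v) - int (neg_degree G v)"

definition regular :: "'a sgraph \<Rightarrow> nat \<Rightarrow> bool" where
  "regular G k \<longleftrightarrow> (\<forall>v\<in>verts G. degree G v = k)"

definition net_regular :: "'a sgraph \<Rightarrow> int \<Rightarrow> bool" where
  "net_regular G \<rho> \<longleftrightarrow> (\<forall>v\<in>verts G. net_degree G v = \<rho>)"

definition connected :: "'a sgraph \<Rightarrow> bool" where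
  "connected G \<longleftrightarrow> (\<forall>u\<in>verts G. \<forall>v\<in>verts G. (adj G)\<^sup>*\<^sup>* u v)"

definition complete :: "'a sgraph \<Rightarrow> bool" where
  "complete G \<longleftrightarrow> (\<forall>u\<in>verts G. \<forall>v\<in>verts G. u \<noteq> v \<longrightarrow> adj G u v)"

definition edgeless :: "'a sgraph \<Rightarrow> bool" where
  "edgeless G \<longleftrightarrow> (\<forall>u v. sgn G u v = 0)"

definition homogeneous :: "'a sgraph \<Rightarrow> bool" where
  "homogeneous G \<longleftrightarrow> (\<forall>u v. sgn G u v \<ge> 0) \<or> (\<forall>u v. sgn G u v \<le> 0)"

text \<open>SRSG with parameters (n,r,a,b,c); for complete graphs c is irrelevant
  (the condition on non-adjacent pairs is vacuous).\<close>
definition srsg_params :: "'a sgraph \<Rightarrow> nat \<Rightarrow> nat \<Rightarrow> int \<Rightarrow> int \<Rightarrow> int \<Rightarrow> bool" where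
  "srsg_params G n r a b c \<longleftrightarrow> wf_sgraph G \<and> card (verts G) = n
     \<and> \<not> (homogeneous G \<and> complete G) \<and> \<not> edgeless G
     \<and> (\<forall>v\<in>verts G. A2 G v v = int r)
     \<and> (\<forall>u\<in>verts G. \<forall>v\<in>verts G. sgn G u v = 1 \<longrightarrow> A2 G u v = a)
     \<and> (\<forall>u\<in>verts G. \<forall>v\<in>verts G. sgn G u v = -1 \<longrightarrow> A2 G u v = b)
     \<and> (\<forall>u\<in>verts G. \<forall>v\<in>verts G. u \<noteq> v \<and> sgn G u v = 0 \<longrightarrow> A2 G u v = c)"

definition srsg :: "'a sgraph \<Rightarrow> bool" where
  "srsg G \<longleftrightarrow> (\<exists>n r a b c. srsg_params G n r a b c)"

definition class_C1 :: "'a sgraph \<Rightarrow> bool" where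
  "class_C1 G \<longleftrightarrow> \<not> homogeneous G \<and> (\<exists>n r a b c. srsg_params G n r a b c \<and> a = -b
      \<and> (complete G \<or> (\<not> complete G \<and> c \<noteq> 0)))"

definition class_C4 :: "'a sgraph \<Rightarrow> bool" where
  "class_C4 G \<longleftrightarrow> \<not> homogeneous G \<and> (\<exists>n r a b c. srsg_params G n r a b c \<and> a \<noteq> -b
      \<and> \<not> complete G \<and> c = 0)"

definition class_C5 :: "'a sgraph \<Rightarrow> bool" where
  "class_C5 G \<longleftrightarrow> \<not> homogeneous G \<and> (\<exists>n r a b c. srsg_params G n r a b c \<and> a \<noteq> -b
      \<and> \<not> complete G \<and> 2 * c \<noteq> a + b \<and> c \<noteq> 0)"

definition has_unbalanced_triangle :: "'a sgraph \<Rightarrow> bool" where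
  "has_unbalanced_triangle G \<longleftrightarrow> (\<exists>u\<in>verts G. \<exists>v\<in>verts G. \<exists>w\<in>verts G.
      u \<noteq> v \<and> v \<noteq> w \<and> u \<noteq> w \<and> adj G u v \<and> adj G v w \<and> adj G w u
      \<and> sgn G u v * sgn G v w * sgn G w u = -1)"

definition sg_iso :: "'a sgraph \<Rightarrow> 'b sgraph \<Rightarrow> bool" where
  "sg_iso G H \<longleftrightarrow> (\<exists>f. bij_betw f (verts G) (verts H)
      \<and> (\<forall>u\<in>verts G. \<forall>v\<in>verts G. sgn H (f u) (f v) = sgn G u v))"

text \<open>The signed graph S^1_{2m}: vertex (t, False) is x_t, (t, True) is y_t,
  t \<in> Z_m represented by 0..m-1.\<close>
definition S1 :: "nat \<Rightarrow> (nat \<times> bool) sgraph" where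
  "S1 m = \<lparr> verts = {0..<m} \<times> UNIV,
     sgn = (\<lambda>(t, p) (s, q).
        if t < m \<and> s < m then
          (if t = s \<and> p \<noteq> q then -1
           else if s = (t + 1) mod m \<or> t = (s + 1) mod m then 1 else 0)
        else 0) \<rparr>"

end

theory Submission
  imports Defs
begin

lemma S1_wf: assumes "m \<ge> 2" shows "wf_sgraph (S1 m)"
proof -
  have ne: "\<And>t::nat. t < m \<Longrightarrow> (t+1) mod m \<noteq> t"
  proof -
    fix t :: nat assume t: "t < m"
    show "(t+1) mod m \<noteq> t"
    proof (cases "t+1 < m")
      case True then show ?thesis by simp
    next
      case False then have "t + 1 = m" using t by simp
      then show ?thesis using assms by simp
    qed
  qed
  have ne2: "\<And>t::nat. t < m \<Longrightarrow> t \<noteq> Suc t mod m" using ne by (metis Suc_eq_plus1)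
  show ?thesis unfolding wf_sgraph_def
    by (auto simp: S1_def split: prod.splits dest: ne2)
qed

lemma S1_4_verts: "verts (S1 4) = {(0,False),(0,True),(1,False),(1,True),(2,False),(2,True),(3,False),(3,True)}"
  by (auto simp: S1_def)

lemma S1_5_verts: "verts (S1 5) = {(0,False),(0,True),(1,False),(1,True),(2,False),(2,True),(3,False),(3,True),(4,False),(4,True)}"
  by (auto simp: S1_def)


lemma S1_nh: "\<not> homogeneous (S1 m)" if "m = 4 \<or> m = 5" for m
proof -
  have "sgn (S1 m) (0,False) (0,True) = -1" using that by (auto simp: S1_def)
  moreover have "sgn (S1 m) (0,False) (1,True) = 1" using that by (auto simp: S1_def)
  ultimately have A: "\<not> (\<forall>u v. 0 \<le> sgn (S1 m) u v)" and B: "\<not> (\<forall>u v. sgn (S1 m) u v \<le> 0)"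
    by (metis neg_0_le_iff_le not_one_le_zero zero_le_one)+
  show ?thesis unfolding homogeneous_def using A B by blast
qed

lemma S1_ne: "\<not> edgeless (S1 m)" if "m = 4 \<or> m = 5" for m
proof -
  have "sgn (S1 m) (0,False) (0,True) = -1" using that by (auto simp: S1_def)
  then show ?thesis unfolding edgeless_def by force
qed

lemma S1_4_params: "srsg_params (S1 4) 8 5 (-2) 4 4"
proof -
  have 1: "\<forall>v\<in>verts (S1 4). A2 (S1 4) v v = int 5"
    unfolding A2_def S1_4_verts by (simp add: S1_def)
  have 2: "\<forall>u\<in>verts (S1 4). \<forall>v\<in>verts (S1 4). sgn (S1 4) u v = 1 \<longrightarrow> A2 (S1 4) u v = -2"
    unfolding A2_def S1_4_verts by (simp add: S1_def)
  have 3: "\<forall>u\<in>verts (S1 4). \<forall>v\<in>verts (S1 4). sgn (S1 4) u v = -1 \<longrightarrow> A2 (S1 4) u v = 4"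
    unfolding A2_def S1_4_verts by (simp add: S1_def)
  have 4: "\<forall>u\<in>verts (S1 4). \<forall>v\<in>verts (S1 4). u \<noteq> v \<and> sgn (S1 4) u v = 0 \<longrightarrow> A2 (S1 4) u v = 4"
    unfolding A2_def S1_4_verts by (simp add: S1_def)
  have 5: "card (verts (S1 4)) = 8" unfolding S1_4_verts by simp
  show ?thesis unfolding srsg_params_def using 1 2 3 4 5 S1_wf[of 4] S1_nh[of 4] S1_ne[of 4] by simp
qed

lemma S1_5_params: "srsg_params (S1 5) 10 5 (-2) 4 2"
proof -
  have 1: "\<forall>v\<in>verts (S1 5). A2 (S1 5) v v = int 5"
    unfolding A2_def S1_5_verts by (simp add: S1_def)
  have 2: "\<forall>u\<in>verts (S1 5). \<forall>v\<in>verts (S1 5). sgn (S1 5) u v = 1 \<longrightarrow> A2 (S1 5) u v = -2"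
    unfolding A2_def S1_5_verts by (simp add: S1_def)
  have 3: "\<forall>u\<in>verts (S1 5). \<forall>v\<in>verts (S1 5). sgn (S1 5) u v = -1 \<longrightarrow> A2 (S1 5) u v = 4"
    unfolding A2_def S1_5_verts by (simp add: S1_def)
  have 4: "\<forall>u\<in>verts (S1 5). \<forall>v\<in>verts (S1 5). u \<noteq> v \<and> sgn (S1 5) u v = 0 \<longrightarrow> A2 (S1 5) u v = 2"
    unfolding A2_def S1_5_verts by (simp add: S1_def)
  have 5: "card (verts (S1 5)) = 10" unfolding S1_5_verts by simp
  show ?thesis unfolding srsg_params_def using 1 2 3 4 5 S1_wf[of 5] S1_nh[of 5] S1_ne[of 5] by simp
qed

definition Pos :: "'a sgraph \<Rightarrow> 'a \<Rightarrow> 'a set" where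
  "Pos G u = {v \<in> verts G. sgn G u v = 1}"

definition mate :: "'a sgraph \<Rightarrow> 'a \<Rightarrow> 'a" where
  "mate G u = (THE v. v \<in> verts G \<and> sgn G u v = -1)"

locale L =
  fixes G :: "'a sgraph" and n r :: nat and a b c :: int
  assumes params: "srsg_params G n r a b c"
    and conn: "connected G" and nc: "\<not> complete G"
    and reg: "regular G 5" and netr: "net_regular G 3"
    and cls: "a + b \<noteq> 2 * c"
    and tri: "has_unbalanced_triangle G"
begin

abbreviation "V \<equiv> verts G"
abbreviation "s \<equiv> sgn G"
abbreviation "P \<equiv> Pos G"
abbreviation "m \<equiv> mate G"

lemma wf: "wf_sgraph G" using params unfolding srsg_params_def by blast
lemma finV: "finite V" using wf unfolding wf_sgraph_def by blast
lemma s_vals: "s u v = -1 \<or> s u v = 0 \<or> s u v = 1" using wf unfolding wf_sgraph_def by blast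
lemma s_sym: "s u v = s v u" using wf unfolding wf_sgraph_def by blast
lemma s_refl[simp]: "s v v = 0" using wf unfolding wf_sgraph_def by blast
lemma s_supp: "s u v \<noteq> 0 \<Longrightarrow> u \<in> V \<and> v \<in> V" using wf unfolding wf_sgraph_def by blast

lemma A2_diag: "v \<in> V \<Longrightarrow> A2 G v v = int r" using params unfolding srsg_params_def by blast
lemma A2_pos: "u \<in> V \<Longrightarrow> v \<in> V \<Longrightarrow> s u v = 1 \<Longrightarrow> A2 G u v = a" using params unfolding srsg_params_def by blast
lemma A2_neg: "u \<in> V \<Longrightarrow> v \<in> V \<Longrightarrow> s u v = -1 \<Longrightarrow> A2 G u v = b" using params unfolding srsg_params_def by blast
lemma A2_zero: "u \<in> V \<Longrightarrow> v \<in> V \<Longrightarrow> u \<noteq> v \<Longrightarrow> s u v = 0 \<Longrightarrow> A2 G u v = c" using params unfolding srsg_params_def by blast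

lemma degs:
  assumes v: "v \<in> V"
  shows "card (P v) = 4" "card {u \<in> V. s v u = -1} = 1"
proof -
  have d: "card {u \<in> V. adj G v u} = 5" using reg v unfolding regular_def degree_def by blast
  have nd: "int (card (P v)) - int (card {u \<in> V. s v u = -1}) = 3"
    using netr v unfolding net_regular_def net_degree_def pos_degree_def neg_degree_def Pos_def by blast
  have "{u \<in> V. adj G v u} = P v \<union> {u \<in> V. s v u = -1}"
    unfolding adj_def Pos_def using s_vals by auto
  moreover have "P v \<inter> {u \<in> V. s v u = -1} = {}" unfolding Pos_def by auto
  ultimately have "card (P v) + card {u \<in> V. s v u = -1} = 5"
    using d finV by (metis (no_types, lifting) card_Un_disjoint finite_Un finite_subset sup_ge1 Pos_def mem_Collect_eq subsetI)
  with nd show "card (P v) = 4" "card {u \<in> V. s v u = -1} = 1" by linarith+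
qed

lemma mate_props:
  assumes v: "v \<in> V"
  shows "m v \<in> V" "s v (m v) = -1" "\<And>u. s v u = -1 \<Longrightarrow> u = m v"
proof -
  obtain x where x: "{u \<in> V. s v u = -1} = {x}" using degs(2)[OF v] by (rule card_1_singletonE)
  have ex: "\<And>u. (u \<in> V \<and> s v u = -1) \<longleftrightarrow> u = x" using x by blast
  have mx: "m v = x" unfolding mate_def using ex by simp
  show "m v \<in> V" "s v (m v) = -1" using ex mx by auto
  show "\<And>u. s v u = -1 \<Longrightarrow> u = m v" using ex mx s_supp by (metis zero_neq_neg_one)
qed

lemma mate_in[simp]: "v \<in> V \<Longrightarrow> m v \<in> V" using mate_props by blast
lemma s_mate[simp]: "v \<in> V \<Longrightarrow> s v (m v) = -1" using mate_props by blast
lemma s_mate'[simp]: "v \<in> V \<Longrightarrow> s (m v) v = -1" using mate_props s_sym by metis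
lemma mate_uniq: "v \<in> V \<Longrightarrow> s v u = -1 \<Longrightarrow> u = m v" using mate_props by blast
lemma mate_mate[simp]: "v \<in> V \<Longrightarrow> m (m v) = v"
  using mate_uniq[of "m v" v] s_mate' mate_in by metis
lemma mate_neq'[simp]: "v \<in> V \<Longrightarrow> v \<noteq> m v"
proof
  assume "v \<in> V" "v = m v"
  then have "s v v = -1" using s_mate by metis
  then show False by simp
qed
lemma mate_neq[simp]: "v \<in> V \<Longrightarrow> m v \<noteq> v" using mate_neq' by metis

lemma P_iff: "x \<in> P u \<longleftrightarrow> s u x = 1"
proof
  assume "x \<in> P u" then show "s u x = 1" unfolding Pos_def by simp
next
  assume h: "s u x = 1" then have "x \<in> V" using s_supp by (metis zero_neq_one)
  with h show "x \<in> P u" unfolding Pos_def by simp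
qed
lemma P_sym: "x \<in> P u \<longleftrightarrow> u \<in> P x" using P_iff s_sym by metis
lemma P_sub: "P u \<subseteq> V" unfolding Pos_def by blast
lemma finP: "finite (P u)" using finV P_sub finite_subset by blast
lemma notin_P_self[simp]: "u \<notin> P u" using P_iff by simp
lemma mate_notin_P[simp]: "u \<in> V \<Longrightarrow> m u \<notin> P u" using P_iff by simp

lemma s_eq: "u \<in> V \<Longrightarrow> s u x = (if x \<in> P u then 1 else if x = m u then -1 else 0)"
  using P_iff mate_uniq s_vals by (metis s_mate)

lemma sum_s:
  assumes u: "u \<in> V"
  shows "(\<Sum>w\<in>V. s u w * g w) = (\<Sum>w\<in>P u. g w) - g (m u)"
proof -
  have "(\<Sum>w\<in>V. s u w * g w) = (\<Sum>w\<in>V. (if w \<in> P u then g w else 0) - (if w = m u then g w else 0))"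
    by (rule sum.cong, simp, subst s_eq[OF u], use u in auto)
  also have "\<dots> = (\<Sum>w\<in>V. (if w \<in> P u then g w else 0)) - (\<Sum>w\<in>V. (if w = m u then g w else 0))"
    by (rule sum_subtractf)
  also have "(\<Sum>w\<in>V. (if w \<in> P u then g w else 0)) = (\<Sum>w\<in>P u. g w)"
    using finV P_sub by (simp add: sum.inter_filter[symmetric] Int_absorb1 Pos_def)
  also have "(\<Sum>w\<in>V. (if w = m u then g w else 0)) = g (m u)"
    using finV u by (simp add: sum.delta')
  finally show ?thesis .
qed


lemma A2_sym: "A2 G u v = A2 G v u"
  unfolding A2_def by (rule sum.cong, simp, simp add: s_sym mult.commute)

lemma A2_expr:
  assumes u: "u \<in> V" and v: "v \<in> V"
  shows "A2 G u v = c + (int r - c) * (if u = v then 1 else 0) + (a - c) * s u v + (a + b - 2*c) * (if u = m v then 1 else 0)"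
proof (cases "u = v")
  case True then show ?thesis using A2_diag u by simp
next
  case False
  consider "s u v = -1" | "s u v = 0" | "s u v = 1" using s_vals by blast
  then show ?thesis
  proof cases
    case 1 then have "u = m v" using mate_uniq[OF v] s_sym by metis
    then show ?thesis using 1 False A2_neg u v by simp
  next
    case 2
    have "u \<noteq> m v" using 2 s_mate' v by force
    then show ?thesis using 2 False A2_zero u v by simp
  next
    case 3
    have "u \<noteq> m v" using 3 s_mate' v by force
    then show ?thesis using 3 False A2_pos u v by simp
  qed
qed

lemma rowsum: "u \<in> V \<Longrightarrow> (\<Sum>w\<in>V. s u w) = 3"
  using sum_s[of u "\<lambda>_. 1"] degs(1)[of u] by simp

definition "LL u v = (\<Sum>w\<in>V. s u w * A2 G w v)"

lemma LL_expr:
  assumes u: "u \<in> V" and v: "v \<in> V"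
  shows "LL u v = 3 * c + (int r - c) * s u v + (a - c) * A2 G u v + (a + b - 2*c) * s u (m v)"
proof -
  have "LL u v = (\<Sum>w\<in>V. c * s u w + (int r - c) * (s u w * (if w = v then 1 else 0)) + (a - c) * (s u w * s w v)
        + (a + b - 2*c) * (s u w * (if w = m v then 1 else 0)))"
    unfolding LL_def by (rule sum.cong, simp, subst A2_expr, simp, simp add: v, simp add: algebra_simps)
  also have "\<dots> = c * (\<Sum>w\<in>V. s u w) + (int r - c) * (\<Sum>w\<in>V. s u w * (if w = v then 1 else 0)) + (a - c) * (\<Sum>w\<in>V. s u w * s w v)
        + (a + b - 2*c) * (\<Sum>w\<in>V. s u w * (if w = m v then 1 else 0))"
    by (simp add: sum.distrib sum_distrib_left)
  also have "(\<Sum>w\<in>V. s u w * (if w = v then 1 else 0)) = s u v"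
    using finV v by (simp add: if_distrib sum.delta' cong: if_cong)
  also have "(\<Sum>w\<in>V. s u w * (if w = m v then 1 else 0)) = s u (m v)"
    using finV v by (simp add: if_distrib sum.delta' cong: if_cong)
  also have "(\<Sum>w\<in>V. s u w * s w v) = A2 G u v" unfolding A2_def ..
  finally show ?thesis using rowsum[OF u] by simp
qed

lemma LL_swap: "LL u v = LL v u"
proof -
  have "LL u v = (\<Sum>w\<in>V. \<Sum>z\<in>V. s u w * (s w z * s z v))"
    unfolding LL_def A2_def by (simp add: sum_distrib_left)
  also have "\<dots> = (\<Sum>z\<in>V. \<Sum>w\<in>V. s u w * (s w z * s z v))" by (rule sum.swap)
  also have "\<dots> = (\<Sum>z\<in>V. \<Sum>w\<in>V. s v z * (s z w * s w u))"
    by (rule sum.cong, simp, rule sum.cong, simp, simp add: s_sym[of u] s_sym[of v] s_sym[of w z for w z] mult.commute mult.left_commute)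
  also have "\<dots> = LL v u" unfolding LL_def A2_def by (simp add: sum_distrib_left)
  finally show ?thesis .
qed

lemma comm:
  assumes u: "u \<in> V" and v: "v \<in> V"
  shows "s u (m v) = s (m u) v"
proof -
  have "LL u v = LL v u" by (rule LL_swap)
  then have "(a + b - 2*c) * s u (m v) = (a + b - 2*c) * s v (m u)"
    using LL_expr[OF u v] LL_expr[OF v u] A2_sym[of u v] s_sym[of u v] by simp
  then have "s u (m v) = s v (m u)" using cls by simp
  then show ?thesis using s_sym by metis
qed



lemma tri_xy: "\<exists>x\<in>V. \<exists>y. s x y = 1 \<and> s (m x) y = 1"
proof -
  obtain u v w where uvw: "u \<in> V" "v \<in> V" "w \<in> V" "u \<noteq> v" "v \<noteq> w" "u \<noteq> w"
    "s u v \<noteq> 0" "s v w \<noteq> 0" "s w u \<noteq> 0" "s u v * s v w * s w u = -1"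
    using tri unfolding has_unbalanced_triangle_def adj_def by blast
  have vals: "s u v = -1 \<or> s u v = 1" "s v w = -1 \<or> s v w = 1" "s w u = -1 \<or> s w u = 1"
    using uvw s_vals by blast+
  consider "s u v = -1" "s v w = 1" "s w u = 1" | "s u v = 1" "s v w = -1" "s w u = 1"
    | "s u v = 1" "s v w = 1" "s w u = -1" | "s u v = -1" "s v w = -1" "s w u = -1"
    using vals uvw(10) by fastforce
  then show ?thesis
  proof cases
    case 1 then have "v = m u" using mate_uniq[OF uvw(1)] s_sym by metis
    then have "s u w = 1 \<and> s (m u) w = 1" using 1 s_sym[of u w] by simp
    then show ?thesis using uvw(1) by blast
  next
    case 2 then have "w = m v" using mate_uniq[OF uvw(2)] s_sym by metis
    then have "s v u = 1 \<and> s (m v) u = 1" using 2 s_sym[of u v] by simp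
    then show ?thesis using uvw(2) by blast
  next
    case 3 then have "u = m w" using mate_uniq[OF uvw(3)] s_sym by metis
    then have "s w v = 1 \<and> s (m w) v = 1" using 3 s_sym[of v w] by simp
    then show ?thesis using uvw(3) by blast
  next
    case 4 then have "v = m u" "w = m v" using mate_uniq uvw s_sym by metis+
    then have "w = u" using uvw by simp
    then show ?thesis using uvw by simp
  qed
qed

lemma A2_mate: "x \<in> V \<Longrightarrow> A2 G x (m x) = (\<Sum>w\<in>P x. s w (m x))"
  unfolding A2_def using sum_s[of x "\<lambda>w. s w (m x)"] by simp

lemma nonneg_mate: "x \<in> V \<Longrightarrow> w \<in> P x \<Longrightarrow> 0 \<le> s w (m x)"
proof (rule ccontr)
  assume x: "x \<in> V" and w: "w \<in> P x" and h: "\<not> 0 \<le> s w (m x)"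
  then have "s w (m x) = -1" using s_vals[of w "m x"] by auto
  then have "s (m x) w = -1" using s_sym by metis
  then have "w = x" using mate_uniq[of "m x" w] x by simp
  then show False using w by simp
qed

lemma b_pos: "b \<ge> 1"
proof -
  obtain x y where x: "x \<in> V" and xy: "s x y = 1" "s (m x) y = 1" using tri_xy by blast
  have y: "y \<in> P x" using xy P_iff by blast
  have "b = A2 G x (m x)" using A2_neg x by simp
  also have "\<dots> = (\<Sum>w\<in>P x. s w (m x))" using A2_mate x by simp
  also have "\<dots> \<ge> s y (m x)" by (rule member_le_sum[OF y], use nonneg_mate x in auto, rule finP)
  finally show ?thesis using xy s_sym[of y "m x"] by simp
qed

lemma full_nb: "u \<in> V \<Longrightarrow> \<exists>w\<in>P u. s (m u) w = 1"
proof (rule ccontr)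
  assume u: "u \<in> V" and h: "\<not> (\<exists>w\<in>P u. s (m u) w = 1)"
  have "\<And>w. w \<in> P u \<Longrightarrow> s w (m u) \<le> 0"
  proof -
    fix w assume "w \<in> P u"
    then have "s (m u) w \<noteq> 1" using h by blast
    then have "s w (m u) \<noteq> 1" using s_sym by metis
    then show "s w (m u) \<le> 0" using s_vals[of w "m u"] by auto
  qed
  then have "(\<Sum>w\<in>P u. s w (m u)) \<le> 0" by (rule sum_nonpos)
  then have "b \<le> 0" using A2_mate[OF u] A2_neg[OF u] u by simp
  then show False using b_pos by simp
qed


lemma A2_row: "u \<in> V \<Longrightarrow> A2 G u x = (\<Sum>z\<in>P u. s z x) - s (m u) x"
  unfolding A2_def using sum_s[of u "\<lambda>z. s z x"] by simp

lemma inV: "s u v = 1 \<Longrightarrow> v \<in> V" using s_supp[of u v] by simp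
lemma inV': "s u v = 1 \<Longrightarrow> u \<in> V" using s_supp[of u v] by simp

lemma SB:
  assumes u: "u \<in> V" and uv: "s u v = 1"
  shows "s (m u) v = 1"
proof (rule ccontr)
  assume h: "s (m u) v \<noteq> 1"
  have v: "v \<in> V" using inV uv by blast
  have v0: "s (m u) v = 0"
  proof -
    have "s (m u) v \<noteq> -1"
    proof
      assume "s (m u) v = -1"
      then have "v = m (m u)" using mate_uniq[of "m u" v] u by simp
      then have "v = u" using u by simp
      then show False using uv by simp
    qed
    then show ?thesis using h s_vals by blast
  qed
  obtain w where w: "w \<in> P u" "s (m u) w = 1" using full_nb[OF u] by blast
  have wV: "w \<in> V" using w P_sub by blast
  have suw: "s u w = 1" using w P_iff by blast
  have c1: "s u (m w) = 1" using comm[OF u wV] w by simp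
  have c2: "s u (m v) = 0" using comm[OF u v] v0 by simp
  have c3: "s (m u) (m w) = 1" using comm[OF mate_in[OF u] wV] u suw by simp
  have mwP: "m w \<in> P u" using c1 P_iff by blast
  have vP: "v \<in> P u" using uv P_iff by blast
  have d1: "v \<noteq> w" using v0 w by auto
  have d2: "v \<noteq> m w" using v0 c3 by auto
  have d3: "w \<noteq> m w" using wV by simp
  define R where "R = P u - {w} - {m w} - {v}"
  have cardR: "card R = 1" unfolding R_def using degs(1)[OF u] w mwP vP d1 d2 d3 finP
    by (simp add: card_Diff_singleton)
  have finR: "finite R" unfolding R_def using finP by simp
  have split: "(\<Sum>z\<in>P u. f z) = f w + f (m w) + f v + (\<Sum>z\<in>R. f z)" for f :: "'a \<Rightarrow> int"
  proof -
    have "(\<Sum>z\<in>P u. f z) = f w + (\<Sum>z\<in>P u - {w}. f z)" using w finP by (simp add: sum.remove)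
    also have "(\<Sum>z\<in>P u - {w}. f z) = f (m w) + (\<Sum>z\<in>P u - {w} - {m w}. f z)"
      using mwP d3 finP by (subst sum.remove, auto)
    also have "(\<Sum>z\<in>P u - {w} - {m w}. f z) = f v + (\<Sum>z\<in>R. f z)"
      unfolding R_def using vP d1 d2 finP by (subst sum.remove, auto)
    finally show ?thesis by simp
  qed
  have Rle: "(\<Sum>z\<in>R. s z w) \<le> 1"
  proof -
    have "(\<Sum>z\<in>R. s z w) \<le> of_nat (card R) * 1"
    proof (rule sum_bounded_above)
      fix z show "s z w \<le> 1" using s_vals[of z w] by auto
    qed
    then show ?thesis using cardR by simp
  qed
  have a1: "a = (\<Sum>z\<in>P u. s z w) - 1" using A2_row[OF u, of w] A2_pos[OF u wV suw] w by simp
  have "s (m w) w = -1" using wV by simp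
  then have a_le: "a \<le> s v w - 1" using a1 split[of "\<lambda>z. s z w"] Rle by simp
  have a2: "a = (\<Sum>z\<in>P u. s z v)" using A2_row[OF u, of v] A2_pos[OF u v uv] v0 by simp
  have "s w v \<le> (\<Sum>z\<in>P u. s z v)"
  proof (rule member_le_sum[OF w(1)])
    fix z assume z: "z \<in> P u - {w}"
    show "0 \<le> s z v"
    proof (rule ccontr)
      assume "\<not> 0 \<le> s z v"
      then have "s v z = -1" using s_vals[of z v] s_sym[of z v] by auto
      then have "z = m v" using mate_uniq[OF v] by blast
      then show False using z c2 P_iff by simp
    qed
  next
    show "finite (P u)" by (rule finP)
  qed
  then have "s v w \<le> a" using a2 s_sym[of w v] by simp
  then show False using a_le by simp
qed

lemma SB': "u \<in> V \<Longrightarrow> s (m u) v = 1 \<Longrightarrow> s u v = 1"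
  using SB[of "m u" v] by simp

lemma P_mate: "u \<in> V \<Longrightarrow> P (m u) = P u"
  using SB SB' P_iff by blast

lemma mate_P: "u \<in> V \<Longrightarrow> x \<in> V \<Longrightarrow> m x \<in> P u \<longleftrightarrow> x \<in> P u"
  using P_mate P_sym by (metis mate_mate)


lemma P_eq4:
  assumes u: "u \<in> V" and x: "x \<in> P u" and y: "y \<in> P u" and xy: "x \<noteq> y" "x \<noteq> m y"
  shows "P u = {x, m x, y, m y}"
proof -
  have xV: "x \<in> V" and yV: "y \<in> V" using x y P_sub by blast+
  have mx: "m x \<in> P u" and my: "m y \<in> P u" using mate_P[OF u] xV yV x y by blast+
  have d: "m x \<noteq> y" "m x \<noteq> m y" using xy xV yV mate_mate by metis+
  have sub: "{x, m x, y, m y} \<subseteq> P u" using x y mx my by blast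
  have "card {x, m x, y, m y} = 4" using xy d xV yV by simp
  then show ?thesis using card_subset_eq[OF finP sub] degs(1)[OF u] by simp
qed

lemma P_struct:
  assumes u: "u \<in> V" and w: "w \<in> P u"
  obtains z where "P u = {w, m w, z, m z}" "z \<in> V" "w \<in> V" "w \<noteq> z" "w \<noteq> m z" "z \<in> P u"
proof -
  have wV: "w \<in> V" using w P_sub by blast
  have mw: "m w \<in> P u" using mate_P[OF u wV] w by blast
  have "card (P u - {w, m w}) = 2" using degs(1)[OF u] w mw wV finP
    by (simp add: card_Diff_subset)
  then have "P u - {w, m w} \<noteq> {}" by (metis card.empty zero_neq_numeral)
  then obtain z where z: "z \<in> P u" "z \<noteq> w" "z \<noteq> m w" by blast
  have zV: "z \<in> V" using z P_sub by blast
  have "w \<noteq> m z" using z wV zV mate_mate by metis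
  then show ?thesis using that P_eq4[OF u w z(1)] z zV wV by metis
qed

lemma closed:
  assumes S: "S \<subseteq> V" and u0: "u0 \<in> S" and cl: "\<And>x. x \<in> S \<Longrightarrow> m x \<in> S \<and> P x \<subseteq> S"
  shows "V = S"
proof
  show "S \<subseteq> V" by (rule S)
  show "V \<subseteq> S"
  proof
    fix v assume v: "v \<in> V"
    have "(adj G)\<^sup>*\<^sup>* u0 v" using conn u0 S v unfolding connected_def by blast
    then show "v \<in> S"
    proof (induction rule: rtranclp_induct)
      case base then show ?case by (rule u0)
    next
      case (step y x)
      have yV: "y \<in> V" using step S by blast
      have "s y x \<noteq> 0" using step unfolding adj_def by blast
      then have "x \<in> P y \<or> x = m y" using s_eq[OF yV, of x] by (auto split: if_splits)
      then show ?case using cl[OF step(3)] by blast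
    qed
  qed
qed

lemma s_P: "u \<in> V \<Longrightarrow> x \<in> P u \<Longrightarrow> s u x = 1" using P_iff by blast
lemma s_nP: "u \<in> V \<Longrightarrow> x \<notin> P u \<Longrightarrow> x \<noteq> m u \<Longrightarrow> s u x = 0" using s_eq by simp


lemma iso4:
  assumes VV: "V = {p0,p1,p2,p3,p4,p5,p6,p7}"
    and dist: "distinct [p0,p1,p2,p3,p4,p5,p6,p7]"
    and ms: "m p0 = p1" "m p1 = p0" "m p2 = p3" "m p3 = p2" "m p4 = p5" "m p5 = p4" "m p6 = p7" "m p7 = p6"
    and Ps: "P p0 = {p2,p3,p6,p7}" "P p1 = {p2,p3,p6,p7}" "P p2 = {p4,p5,p0,p1}" "P p3 = {p4,p5,p0,p1}" "P p4 = {p6,p7,p2,p3}" "P p5 = {p6,p7,p2,p3}" "P p6 = {p0,p1,p4,p5}" "P p7 = {p0,p1,p4,p5}"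
  shows "\<exists>f. bij_betw f V (verts (S1 4)) \<and> (\<forall>u\<in>V. \<forall>v\<in>V. sgn (S1 4) (f u) (f v) = s u v)"
proof -
  define f where "f x = (if x = p0 then (0::nat,False) else if x = p1 then (0,True) else if x = p2 then (1::nat,False) else if x = p3 then (1,True) else if x = p4 then (2::nat,False) else if x = p5 then (2,True) else if x = p6 then (3,False) else (3,True))" for x
  have img: "f ` V = verts (S1 4)" unfolding VV S1_4_verts using dist by (auto simp: f_def)
  have c1: "card (verts (S1 4)) = 8" unfolding S1_4_verts by simp
  have c2: "card V = 8" unfolding VV using dist by simp
  have "card (f ` V) = card V" using img c1 c2 by simp
  then have "inj_on f V" using finV eq_card_imp_inj_on by blast
  then have bij: "bij_betw f V (verts (S1 4))" using img unfolding bij_betw_def by blast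
  have inV: "p0 \<in> V" "p1 \<in> V" "p2 \<in> V" "p3 \<in> V" "p4 \<in> V" "p5 \<in> V" "p6 \<in> V" "p7 \<in> V" unfolding VV by simp_all
  have neq: "p0 \<noteq> p1" "p0 \<noteq> p2" "p0 \<noteq> p3" "p0 \<noteq> p4" "p0 \<noteq> p5" "p0 \<noteq> p6" "p0 \<noteq> p7" "p1 \<noteq> p0" "p1 \<noteq> p2" "p1 \<noteq> p3" "p1 \<noteq> p4" "p1 \<noteq> p5" "p1 \<noteq> p6" "p1 \<noteq> p7" "p2 \<noteq> p0" "p2 \<noteq> p1" "p2 \<noteq> p3" "p2 \<noteq> p4" "p2 \<noteq> p5" "p2 \<noteq> p6" "p2 \<noteq> p7" "p3 \<noteq> p0" "p3 \<noteq> p1" "p3 \<noteq> p2" "p3 \<noteq> p4" "p3 \<noteq> p5" "p3 \<noteq> p6" "p3 \<noteq> p7" "p4 \<noteq> p0" "p4 \<noteq> p1" "p4 \<noteq> p2" "p4 \<noteq> p3" "p4 \<noteq> p5" "p4 \<noteq> p6" "p4 \<noteq> p7" "p5 \<noteq> p0" "p5 \<noteq> p1" "p5 \<noteq> p2" "p5 \<noteq> p3" "p5 \<noteq> p4" "p5 \<noteq> p6" "p5 \<noteq> p7" "p6 \<noteq> p0" "p6 \<noteq> p1" "p6 \<noteq> p2" "p6 \<noteq> p3" "p6 \<noteq> p4" "p6 \<noteq> p5" "p6 \<noteq> p7" "p7 \<noteq> p0" "p7 \<noteq> p1" "p7 \<noteq> p2" "p7 \<noteq> p3" "p7 \<noteq>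 p4" "p7 \<noteq> p5" "p7 \<noteq> p6" using dist by auto
  have sgn: "\<forall>u\<in>V. \<forall>v\<in>V. sgn (S1 4) (f u) (f v) = s u v"
    unfolding VV using neq inV ms Ps by (simp add: f_def s_eq S1_def)
  show ?thesis using bij sgn by blast
qed

lemma iso5:
  assumes VV: "V = {p0,p1,p2,p3,p4,p5,p6,p7,p8,p9}"
    and dist: "distinct [p0,p1,p2,p3,p4,p5,p6,p7,p8,p9]"
    and ms: "m p0 = p1" "m p1 = p0" "m p2 = p3" "m p3 = p2" "m p4 = p5" "m p5 = p4" "m p6 = p7" "m p7 = p6" "m p8 = p9" "m p9 = p8"
    and Ps: "P p0 = {p2,p3,p8,p9}" "P p1 = {p2,p3,p8,p9}" "P p2 = {p4,p5,p0,p1}" "P p3 = {p4,p5,p0,p1}" "P p4 = {p6,p7,p2,p3}" "P p5 = {p6,p7,p2,p3}" "P p6 = {p8,p9,p4,p5}" "P p7 = {p8,p9,p4,p5}" "P p8 = {p0,p1,p6,p7}" "P p9 = {p0,p1,p6,p7}"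
  shows "\<exists>f. bij_betw f V (verts (S1 5)) \<and> (\<forall>u\<in>V. \<forall>v\<in>V. sgn (S1 5) (f u) (f v) = s u v)"
proof -
  define f where "f x = (if x = p0 then (0::nat,False) else if x = p1 then (0,True) else if x = p2 then (1::nat,False) else if x = p3 then (1,True) else if x = p4 then (2::nat,False) else if x = p5 then (2,True) else if x = p6 then (3::nat,False) else if x = p7 then (3,True) else if x = p8 then (4,False) else (4,True))" for x
  have img: "f ` V = verts (S1 5)" unfolding VV S1_5_verts using dist by (auto simp: f_def)
  have c1: "card (verts (S1 5)) = 10" unfolding S1_5_verts by simp
  have c2: "card V = 10" unfolding VV using dist by simp
  have "card (f ` V) = card V" using img c1 c2 by simp
  then have "inj_on f V" using finV eq_card_imp_inj_on by blast
  then have bij: "bij_betw f V (verts (S1 5))" using img unfolding bij_betw_def by blast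
  have inV: "p0 \<in> V" "p1 \<in> V" "p2 \<in> V" "p3 \<in> V" "p4 \<in> V" "p5 \<in> V" "p6 \<in> V" "p7 \<in> V" "p8 \<in> V" "p9 \<in> V" unfolding VV by simp_all
  have neq: "p0 \<noteq> p1" "p0 \<noteq> p2" "p0 \<noteq> p3" "p0 \<noteq> p4" "p0 \<noteq> p5" "p0 \<noteq> p6" "p0 \<noteq> p7" "p0 \<noteq> p8" "p0 \<noteq> p9" "p1 \<noteq> p0" "p1 \<noteq> p2" "p1 \<noteq> p3" "p1 \<noteq> p4" "p1 \<noteq> p5" "p1 \<noteq> p6" "p1 \<noteq> p7" "p1 \<noteq> p8" "p1 \<noteq> p9" "p2 \<noteq> p0" "p2 \<noteq> p1" "p2 \<noteq> p3" "p2 \<noteq> p4" "p2 \<noteq> p5" "p2 \<noteq> p6" "p2 \<noteq> p7" "p2 \<noteq> p8" "p2 \<noteq> p9" "p3 \<noteq> p0" "p3 \<noteq> p1" "p3 \<noteq> p2" "p3 \<noteq> p4" "p3 \<noteq> p5" "p3 \<noteq> p6" "p3 \<noteq> p7" "p3 \<noteq> p8" "p3 \<noteq> p9" "p4 \<noteq> p0" "p4 \<noteq> p1" "p4 \<noteq> p2" "p4 \<noteq> p3" "p4 \<noteq> p5" "p4 \<noteq> p6" "p4 \<noteq> p7" "p4 \<noteq> p8" "p4 \<noteq> p9" "p5 \<noteq> p0" "p5 \<noteq> p1" "p5 \<noteq> p2" "p5 \<noteq> p3" "p5 \<noteq> p4" "p5 \<noteq> p6" "p5 \<noteq> p7" "p5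 \<noteq> p8" "p5 \<noteq> p9" "p6 \<noteq> p0" "p6 \<noteq> p1" "p6 \<noteq> p2" "p6 \<noteq> p3" "p6 \<noteq> p4" "p6 \<noteq> p5" "p6 \<noteq> p7" "p6 \<noteq> p8" "p6 \<noteq> p9" "p7 \<noteq> p0" "p7 \<noteq> p1" "p7 \<noteq> p2" "p7 \<noteq> p3" "p7 \<noteq> p4" "p7 \<noteq> p5" "p7 \<noteq> p6" "p7 \<noteq> p8" "p7 \<noteq> p9" "p8 \<noteq> p0" "p8 \<noteq> p1" "p8 \<noteq> p2" "p8 \<noteq> p3" "p8 \<noteq> p4" "p8 \<noteq> p5" "p8 \<noteq> p6" "p8 \<noteq> p7" "p8 \<noteq> p9" "p9 \<noteq> p0" "p9 \<noteq> p1" "p9 \<noteq> p2" "p9 \<noteq> p3" "p9 \<noteq> p4" "p9 \<noteq> p5" "p9 \<noteq> p6" "p9 \<noteq> p7" "p9 \<noteq> p8" using dist by auto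
  have sgn: "\<forall>u\<in>V. \<forall>v\<in>V. sgn (S1 5) (f u) (f v) = s u v"
    unfolding VV using neq inV ms Ps by (simp add: f_def s_eq S1_def)
  show ?thesis using bij sgn by blast
qed


lemma bne: "x \<in> V \<Longrightarrow> y \<in> V \<Longrightarrow> x \<noteq> y \<Longrightarrow> x \<noteq> m y \<Longrightarrow> x \<noteq> y \<and> x \<noteq> m y \<and> m x \<noteq> y \<and> m x \<noteq> m y"
  by (metis mate_mate)

lemma bmem: "q \<in> V \<Longrightarrow> x \<in> P q \<Longrightarrow> y \<in> V \<Longrightarrow> y \<notin> P q \<Longrightarrow> x \<noteq> y \<and> x \<noteq> m y"
  using mate_P by blast

lemma s_mate_eq: "x \<in> V \<Longrightarrow> v \<noteq> x \<Longrightarrow> v \<noteq> m x \<Longrightarrow> s (m x) v = s x v"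
  using s_eq[of x v] s_eq[of "m x" v] P_mate[of x] by simp

lemma sum4: "distinct [p1,p2,p3,p4] \<Longrightarrow> (\<Sum>x\<in>{p1,p2,p3,p4}. f x) = f p1 + f p2 + f p3 + (f p4 :: int)"
  by simp

lemma main: "(\<exists>f. bij_betw f V (verts (S1 4)) \<and> (\<forall>u\<in>V. \<forall>v\<in>V. sgn (S1 4) (f u) (f v) = s u v))
    \<or> (\<exists>f. bij_betw f V (verts (S1 5)) \<and> (\<forall>u\<in>V. \<forall>v\<in>V. sgn (S1 5) (f u) (f v) = s u v))"
proof -
  obtain u0 where u0: "u0 \<in> V" using tri_xy by blast
  have "P u0 \<noteq> {}" using degs(1)[OF u0] by (metis card.empty zero_neq_numeral)
  then obtain w where w: "w \<in> P u0" by blast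
  obtain z where Pu0: "P u0 = {w, m w, z, m z}" and zV: "z \<in> V" and wV: "w \<in> V"
     and wz: "w \<noteq> z" "w \<noteq> m z" and zP: "z \<in> P u0"
    using P_struct[OF u0 w] by metis
  have u0w: "u0 \<in> P w" using w P_sym by blast
  have u0z: "u0 \<in> P z" using zP P_sym by blast
  obtain w2 where Pw: "P w = {u0, m u0, w2, m w2}" and w2V: "w2 \<in> V"
     and uw2: "u0 \<noteq> w2" "u0 \<noteq> m w2" and w2P: "w2 \<in> P w"
    using P_struct[OF wV u0w] by metis
  obtain z2 where Pz: "P z = {u0, m u0, z2, m z2}" and z2V: "z2 \<in> V"
     and uz2: "u0 \<noteq> z2" "u0 \<noteq> m z2" and z2P: "z2 \<in> P z"
    using P_struct[OF zV u0z] by metis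
  have UW: "w \<noteq> u0 \<and> w \<noteq> m u0" using bmem[OF u0 w u0] by simp
  have UZ: "z \<noteq> u0 \<and> z \<noteq> m u0" using bmem[OF u0 zP u0] by simp
  have mPu0: "P (m u0) = P u0" "P (m w) = P w" "P (m z) = P z" "P (m w2) = P w2" "P (m z2) = P z2"
    using P_mate u0 wV zV w2V z2V by blast+
  show ?thesis
  proof (cases "z \<in> P w")
    case True
    have Pw': "P w = {u0, m u0, z, m z}" using P_eq4[OF wV u0w True] UZ mate_mate[OF u0] mate_mate[OF zV] by metis
    have wPz: "w \<in> P z" using True P_sym by blast
    have Pz': "P z = {u0, m u0, w, m w}" using P_eq4[OF zV u0z wPz] UW mate_mate[OF u0] mate_mate[OF wV] by metis
    define S where "S = {u0, m u0, w, m w, z, m z}"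
    have VS: "V = S"
    proof (rule closed)
      show "S \<subseteq> V" unfolding S_def using u0 wV zV by simp
      show "u0 \<in> S" unfolding S_def by simp
      fix x assume "x \<in> S"
      then show "m x \<in> S \<and> P x \<subseteq> S" unfolding S_def using Pu0 Pw' Pz' mPu0 u0 wV zV by auto
    qed
    have "complete G" unfolding complete_def adj_def
    proof (intro ballI impI)
      fix x y assume x: "x \<in> V" and y: "y \<in> V" and xy: "x \<noteq> y"
      have "S = insert x (insert (m x) (P x))" using x unfolding VS S_def
        using Pu0 Pw' Pz' mPu0 u0 wV zV by auto
      moreover have "y \<in> S" using y VS by simp
      ultimately have "y = m x \<or> y \<in> P x" using xy by blast
      then show "s x y \<noteq> 0" using x s_P by auto
    qed
    then show ?thesis using nc by blast
  next
    case False
    note nzw = False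
    have nwz: "w \<notin> P z" using nzw P_sym by blast
    have WZ: "w \<noteq> z \<and> w \<noteq> m z" using wz by simp
    have UW2: "u0 \<noteq> w2 \<and> u0 \<noteq> m w2" using uw2 by simp
    have UZ2: "u0 \<noteq> z2 \<and> u0 \<noteq> m z2" using uz2 by simp
    have WW2: "w2 \<noteq> w \<and> w2 \<noteq> m w" using bmem[OF wV w2P wV] by simp
    have W2Z: "w2 \<noteq> z \<and> w2 \<noteq> m z" using bmem[OF wV w2P zV nzw] .
    have WZ2: "z2 \<noteq> w \<and> z2 \<noteq> m w" using bmem[OF zV z2P wV nwz] .
    have ZZ2: "z2 \<noteq> z \<and> z2 \<noteq> m z" using bmem[OF zV z2P zV] by simp
    show ?thesis
    proof (cases "w2 \<in> P z")
      case True
      have Pz': "P z = {u0, m u0, w2, m w2}" using P_eq4[OF zV u0z True] UW2 by metis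
      have wPw2: "w \<in> P w2" using w2P P_sym by blast
      have zPw2: "z \<in> P w2" using True P_sym by blast
      have Pw2: "P w2 = {w, m w, z, m z}" using P_eq4[OF w2V wPw2 zPw2] WZ by metis
      have VS: "V = {u0, m u0, w, m w, w2, m w2, z, m z}"
      proof (rule closed)
        show "{u0, m u0, w, m w, w2, m w2, z, m z} \<subseteq> V" using u0 wV zV w2V by simp
        show "u0 \<in> {u0, m u0, w, m w, w2, m w2, z, m z}" by simp
        fix x assume "x \<in> {u0, m u0, w, m w, w2, m w2, z, m z}"
        then show "m x \<in> {u0, m u0, w, m w, w2, m w2, z, m z} \<and> P x \<subseteq> {u0, m u0, w, m w, w2, m w2, z, m z}"
          using Pu0 Pw Pz' Pw2 mPu0 u0 wV zV w2V by auto
      qed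
      have d: "distinct [u0, m u0, w, m w, w2, m w2, z, m z]"
        using bne[OF wV u0] bne[OF zV u0] bne[OF u0 w2V] bne[OF w2V wV] bne[OF wV zV] bne[OF w2V zV]
          UW UZ UW2 WW2 WZ W2Z u0 wV zV w2V by auto
      have "\<exists>f. bij_betw f V (verts (S1 4)) \<and> (\<forall>u\<in>V. \<forall>v\<in>V. sgn (S1 4) (f u) (f v) = s u v)"
        by (rule iso4[OF VS d], use u0 wV zV w2V in simp_all, use Pu0 Pw Pz' Pw2 mPu0 in \<open>auto simp: insert_commute\<close>)
      then show ?thesis by blast
    next
      case False
      note nw2z = False
      have W2Z2: "z2 \<noteq> w2 \<and> z2 \<noteq> m w2" using bmem[OF zV z2P w2V nw2z] .
      have wPw2: "w \<in> P w2" using w2P P_sym by blast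
      obtain y where Pw2: "P w2 = {w, m w, y, m y}" and yV: "y \<in> V"
        and wy: "w \<noteq> y" "w \<noteq> m y" and yP: "y \<in> P w2"
        using P_struct[OF w2V wPw2] by metis
      show ?thesis
      proof (cases "z2 \<in> P w2")
        case True
        have Pw2': "P w2 = {w, m w, z2, m z2}" using P_eq4[OF w2V wPw2 True] WZ2 mate_mate[OF wV] mate_mate[OF z2V] by metis
        have zPz2: "z \<in> P z2" using z2P P_sym by blast
        have w2Pz2: "w2 \<in> P z2" using True P_sym by blast
        have Pz2: "P z2 = {z, m z, w2, m w2}" using P_eq4[OF z2V zPz2 w2Pz2] W2Z mate_mate[OF zV] mate_mate[OF w2V] by metis
        define S where "S = {u0, m u0, w, m w, w2, m w2, z2, m z2, z, m z}"
        have VS: "V = S"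
        proof (rule closed)
          show "S \<subseteq> V" unfolding S_def using u0 wV zV w2V z2V by simp
          show "u0 \<in> S" unfolding S_def by simp
          fix x assume "x \<in> S"
          then show "m x \<in> S \<and> P x \<subseteq> S" unfolding S_def
            using Pu0 Pw Pz Pw2' Pz2 mPu0 u0 wV zV w2V z2V by auto
        qed
        have d: "distinct [u0, m u0, w, m w, w2, m w2, z2, m z2, z, m z]"
          using bne[OF wV u0] bne[OF zV u0] bne[OF u0 w2V] bne[OF u0 z2V] bne[OF wV zV] bne[OF w2V wV]
            bne[OF z2V wV] bne[OF w2V zV] bne[OF z2V w2V] bne[OF z2V zV]
            UW UZ UW2 UZ2 WW2 WZ W2Z WZ2 W2Z2 ZZ2 u0 wV zV w2V z2V by auto
        have "\<exists>f. bij_betw f V (verts (S1 5)) \<and> (\<forall>u\<in>V. \<forall>v\<in>V. sgn (S1 5) (f u) (f v) = s u v)"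
          by (rule iso5[OF VS[unfolded S_def] d], use u0 wV zV w2V z2V in simp_all,
              use Pu0 Pw Pz Pw2' Pz2 mPu0 in \<open>auto simp: insert_commute\<close>)
        then show ?thesis by blast
      next
        case False
        note nz2w2 = False
        have WY: "y \<noteq> w \<and> y \<noteq> m w" using wy bne[OF wV yV] by metis
        have w2nPu0: "w2 \<notin> P u0" using Pu0 WW2 W2Z by auto
        have u0nPw2: "u0 \<notin> P w2" using w2nPu0 P_sym by blast
        have znPw2: "z \<notin> P w2" using nw2z P_sym by blast
        have UY: "y \<noteq> u0 \<and> y \<noteq> m u0" using bmem[OF w2V yP u0 u0nPw2] .
        have ZY: "y \<noteq> z \<and> y \<noteq> m z" using bmem[OF w2V yP zV znPw2] .
        have Z2Y: "z2 \<noteq> y \<and> z2 \<noteq> m y" using bmem[OF w2V yP z2V nz2w2] bne[OF yV z2V] by metis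
        have W2Y: "y \<noteq> w2 \<and> y \<noteq> m w2" using bmem[OF w2V yP w2V] by simp
        have s1: "s u0 w2 = 0" using s_nP[OF u0 w2nPu0] UW2 bne[OF u0 w2V] by metis
        have cA: "c = A2 G u0 w2" using A2_zero[OF u0 w2V _ s1] UW2 by simp
        have dW: "distinct [w, m w, z, m z]" using bne[OF wV zV] WZ wV zV by auto
        have "A2 G u0 w2 = s w w2 + s (m w) w2 + s z w2 + s (m z) w2 - s (m u0) w2"
          using A2_row[OF u0, of w2] Pu0 sum4[OF dW] by simp
        moreover have "s w w2 = 1" "s (m w) w2 = 1" using s_P[OF wV w2P] s_P[of "m w" w2] mPu0 w2P wV by auto
        moreover have "s z w2 = 0" "s (m z) w2 = 0" using s_nP[OF zV nw2z] s_nP[of "m z" w2] mPu0 nw2z zV W2Z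
          by auto
        moreover have "s (m u0) w2 = 0" using s_mate_eq[OF u0, of w2] s1 UW2 bne[OF u0 w2V] by metis
        ultimately have c2: "c = 2" using cA by simp
        have s2: "s w2 z2 = 0" using s_nP[OF w2V nz2w2] W2Z2 by metis
        have cB: "c = A2 G w2 z2" using A2_zero[OF w2V z2V _ s2] W2Z2 by metis
        have dY: "distinct [w, m w, y, m y]" using bne[OF wV yV] wy wV yV by auto
        have z2nPw: "z2 \<notin> P w" using Pw UZ2 W2Z2 bne[OF u0 z2V] bne[OF w2V z2V] by auto
        have "A2 G w2 z2 = s w z2 + s (m w) z2 + s y z2 + s (m y) z2 - s (m w2) z2"
          using A2_row[OF w2V, of z2] Pw2 sum4[OF dY] by simp
        moreover have "s w z2 = 0" "s (m w) z2 = 0" using s_nP[OF wV z2nPw] s_nP[of "m w" z2] mPu0 z2nPw wV WZ2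
          by auto
        moreover have "s (m y) z2 = s y z2" using s_mate_eq[OF yV, of z2] Z2Y by metis
        moreover have "s (m w2) z2 = 0" using s_mate_eq[OF w2V, of z2] s2 W2Z2 by metis
        ultimately have "c = 2 * s y z2" using cB by simp
        then have yz2: "s y z2 = 1" using c2 by simp
        have ynPu0: "y \<notin> P u0" using Pu0 WY ZY by auto
        have s3: "s u0 y = 0" using s_nP[OF u0 ynPu0] UY bne[OF u0 yV] by metis
        have cC: "c = A2 G u0 y" using A2_zero[OF u0 yV _ s3] UY by metis
        have ynPw: "y \<notin> P w" using Pw UY W2Y by auto
        have z2Py: "z2 \<in> P y" using yz2 P_iff by blast
        have YZ2: "z2 \<noteq> y \<and> z2 \<noteq> m y" using bmem[OF yV z2Py yV] by simp
        have ynPz: "y \<notin> P z" using Pz UY YZ2 bne[OF yV z2V] mate_mate[OF z2V] by auto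
        have "A2 G u0 y = s w y + s (m w) y + s z y + s (m z) y - s (m u0) y"
          using A2_row[OF u0, of y] Pu0 sum4[OF dW] by simp
        moreover have "s w y = 0" "s (m w) y = 0" using s_nP[OF wV ynPw] s_nP[of "m w" y] mPu0 ynPw wV WY
          by auto
        moreover have "s z y = 0" "s (m z) y = 0" using s_nP[OF zV ynPz] s_nP[of "m z" y] mPu0 ynPz zV ZY
          by auto
        moreover have "s (m u0) y = 0" using s_mate_eq[OF u0, of y] s3 UY by metis
        ultimately have "c = 0" using cC by simp
        then show ?thesis using c2 by simp
      qed
    qed
  qed
qed

end

theorem lemma3p1:
  fixes G :: "'a sgraph"
  assumes "srsg G"
    and "connected G"
    and "\<not> complete G"
    and "regular G 5"
    and "net_regular G 3"
    and "class_C1 G \<or> class_C4 G \<or> class_C5 G"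
    and "has_unbalanced_triangle G"
  shows "(sg_iso G (S1 4) \<and> srsg_params (S1 4) 8 5 (-2) 4 4)
       \<or> (sg_iso G (S1 5) \<and> srsg_params (S1 5) 10 5 (-2) 4 2)"
proof -
  obtain n r a b c where pr: "srsg_params G n r a b c" and ab: "a + b \<noteq> 2 * c"
  proof -
    consider "class_C1 G" | "class_C4 G" | "class_C5 G" using assms(6) by blast
    then show ?thesis
    proof cases
      case 1
      then obtain n r a b c where "srsg_params G n r a b c" "a = -b" "complete G \<or> (\<not> complete G \<and> c \<noteq> 0)"
        unfolding class_C1_def by blast
      then show ?thesis using that assms(3) by fastforce
    next
      case 2
      then obtain n r a b c where "srsg_params G n r a b c" "a \<noteq> -b" "c = 0"
        unfolding class_C4_def by blast
      then show ?thesis using that by fastforce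
    next
      case 3
      then obtain n r a b c where "srsg_params G n r a b c" "2 * c \<noteq> a + b"
        unfolding class_C5_def by blast
      then show ?thesis using that by fastforce
    qed
  qed
  interpret L G n r a b c
    using pr assms(2-5,7) ab by (unfold_locales) auto
  have "(\<exists>f. bij_betw f (verts G) (verts (S1 4)) \<and> (\<forall>u\<in>verts G. \<forall>v\<in>verts G. sgn (S1 4) (f u) (f v) = sgn G u v))
    \<or> (\<exists>f. bij_betw f (verts G) (verts (S1 5)) \<and> (\<forall>u\<in>verts G. \<forall>v\<in>verts G. sgn (S1 5) (f u) (f v) = sgn G u v))"
    by (rule main)
  then show ?thesis unfolding sg_iso_def using S1_4_params S1_5_params by blast
qed

end
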